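(* Let $s \ge 1$ and suppose $D$ is a $T_s$-free digraph on $n$ vertices. Then for every $k \ge 1$ there exists a $K_s$-free graph $G$ on $n$ vertices such that \[ i_k(G) \le \left(\frac{e}{k}\right)^k \cdot \mathrm{fwi}_k(D). \]
   Context: $T_s$ denotes the transitive tournament on $s$ vertices; a digraph is $T_s$-free if it contains no copy of $T_s$. For a digraph $D$, a $k$-tuple $(v_1,\dots,v_k) \in V(D)^k$ is forward independent if there are no $i<j$ in $[k]$ with $(v_i,v_j)$ an arc of $D$; $\mathrm{fwi}_k(D)$ denotes the number of forward independent $k$-tuples in $D$. For a graph $G$, $i_k(G)$ denotes the number of independent sets of size $k$ in $G$. *)

theory Defs
  imports Complex_Main
begin

text \<open>Loops are excluded; both arcs u->v and v->u
may be present.\<close>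

definition digraph :: "'a set \<Rightarrow> ('a \<Rightarrow> 'a \<Rightarrow> bool) \<Rightarrow> bool" where
  "digraph V A \<longleftrightarrow> finite V \<and> (\<forall>v. \<not> A v v)"

definition graph :: "'a set \<Rightarrow> ('a \<Rightarrow> 'a \<Rightarrow> bool) \<Rightarrow> bool" where
  "graph V E \<longleftrightarrow> finite V \<and> (\<forall>v. \<not> E v v) \<and> (\<forall>u v. E u v \<longrightarrow> E v u)"

definition Ts_free :: "nat \<Rightarrow> 'a set \<Rightarrow> ('a \<Rightarrow> 'a \<Rightarrow> bool) \<Rightarrow> bool" where
  "Ts_free s V A \<longleftrightarrow> \<not> (\<exists>f. f ` {..<s} \<subseteq> V \<and> inj_on f {..<s} \<and>
        (\<forall>i j. i < j \<and> j < s \<longrightarrow> A (f i) (f j)))"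

definition Ks_free :: "nat \<Rightarrow> 'a set \<Rightarrow> ('a \<Rightarrow> 'a \<Rightarrow> bool) \<Rightarrow> bool" where
  "Ks_free s V E \<longleftrightarrow> \<not> (\<exists>S. S \<subseteq> V \<and> card S = s \<and>
        (\<forall>u\<in>S. \<forall>v\<in>S. u \<noteq> v \<longrightarrow> E u v))"

text \<open>Forward independent k-tuples (v_1,...,v_k) in V^k, represented as lists
of length k (entries need not be distinct).\<close>
definition fwi :: "nat \<Rightarrow> 'a set \<Rightarrow> ('a \<Rightarrow> 'a \<Rightarrow> bool) \<Rightarrow> nat" where
  "fwi k V A = card {xs. length xs = k \<and> set xs \<subseteq> V \<and>
        (\<forall>i j. i < j \<and> j < k \<longrightarrow> \<not> A (xs ! i) (xs ! j))}"

definition indep_count :: "nat \<Rightarrow> 'a set \<Rightarrow> ('a \<Rightarrow> 'a \<Rightarrow> bool) \<Rightarrow> nat" where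
  "indep_count k V E = card {S. S \<subseteq> V \<and> card S = k \<and>
        (\<forall>u\<in>S. \<forall>v\<in>S. \<not> E u v)}"

end

theory Submission imports Defs "HOL-Combinatorics.Multiset_Permutations" "HOL-Library.FuncSet" begin
lemma fact_exp: "real k ^ k / fact k \<le> exp (real k)"
proof -
  have s: "(\<lambda>n. real k ^ n /\<^sub>R fact n) sums exp (real k)" by (rule exp_converges)
  have "(\<Sum>n\<in>{k}. real k ^ n /\<^sub>R fact n) \<le> (\<Sum>n. real k ^ n /\<^sub>R fact n)"
    by (rule sum_le_suminf) (use s in \<open>auto simp: sums_iff\<close>)
  then show ?thesis using s by (simp add: sums_iff divide_inverse mult.commute)
qed
lemma inv_fact_le: assumes "k \<ge> 1" shows "1 / fact k \<le> (exp 1 / real k) ^ k"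
proof -
  have e: "exp 1 ^ k = exp (real k)" using exp_of_nat_mult[of k "1::real"] by simp
  have "(exp 1 / real k) ^ k = exp (real k) / real k ^ k"
    by (simp add: power_divide e)
  moreover have "real k ^ k > 0" using assms by simp
  ultimately show ?thesis using fact_exp[of k]
    by (simp add: field_simps e)
qed
definition fi :: "('a \<Rightarrow> 'a \<Rightarrow> bool) \<Rightarrow> 'a list \<Rightarrow> bool" where
  "fi A xs \<longleftrightarrow> (\<forall>i j. i < j \<and> j < length xs \<longrightarrow> \<not> A (xs ! i) (xs ! j))"

definition Ef :: "('a \<Rightarrow> 'a \<Rightarrow> bool) \<Rightarrow> (nat \<Rightarrow> 'a) \<Rightarrow> nat \<Rightarrow> nat \<Rightarrow> bool" where
  "Ef A f i j \<longleftrightarrow> (i < j \<and> A (f i) (f j)) \<or> (j < i \<and> A (f j) (f i))"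

lemma graph_Ef: "graph {..<n} (Ef A f)"
  unfolding graph_def Ef_def by auto

lemma Ks_free_Ef:
  assumes "bij_betw f {..<n} V" "Ts_free s V A"
  shows "Ks_free s {..<n} (Ef A f)"
  unfolding Ks_free_def
proof
  assume "\<exists>S. S \<subseteq> {..<n} \<and> card S = s \<and> (\<forall>u\<in>S. \<forall>v\<in>S. u \<noteq> v \<longrightarrow> Ef A f u v)"
  then obtain S where S: "S \<subseteq> {..<n}" "card S = s" "\<forall>u\<in>S. \<forall>v\<in>S. u \<noteq> v \<longrightarrow> Ef A f u v"
    by blast
  have fin: "finite S" using S(1) finite_subset by blast
  define sl where "sl = sorted_list_of_set S"
  have len: "length sl = s" using S(2) fin by (simp add: sl_def)
  have ss: "sorted_wrt (<) sl" by (simp add: sl_def)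
  have dist: "distinct sl" by (simp add: sl_def)
  have set: "set sl = S" using fin by (simp add: sl_def)
  define g where "g = (\<lambda>i. f (sl ! i))"
  have "g ` {..<s} \<subseteq> V"
  proof
    fix y assume "y \<in> g ` {..<s}"
    then obtain i where i: "i < s" "y = g i" by auto
    then have "sl ! i \<in> {..<n}" using S(1) set len nth_mem by blast
    then show "y \<in> V" using bij_betw_apply[OF assms(1)] i by (simp add: g_def)
  qed
  moreover have "inj_on g {..<s}"
  proof (rule inj_onI)
    fix i j assume "i \<in> {..<s}" "j \<in> {..<s}" "g i = g j"
    then have "sl ! i \<in> {..<n}" "sl ! j \<in> {..<n}" "f (sl ! i) = f (sl ! j)"
      using S(1) set len nth_mem by (auto simp: g_def)
    then have "sl ! i = sl ! j" using assms(1) by (auto simp: bij_betw_def inj_on_def)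
    then show "i = j" using dist len \<open>i \<in> {..<s}\<close> \<open>j \<in> {..<s}\<close> nth_eq_iff_index_eq by auto
  qed
  moreover have "\<forall>i j. i < j \<and> j < s \<longrightarrow> A (g i) (g j)"
  proof (intro allI impI)
    fix i j assume ij: "i < j \<and> j < s"
    then have lt: "sl ! i < sl ! j" using ss len sorted_wrt_nth_less by blast
    have "sl ! i \<in> S" "sl ! j \<in> S" using ij set len nth_mem by auto
    then have "Ef A f (sl ! i) (sl ! j)" using S(3) lt by auto
    then show "A (g i) (g j)" using lt by (auto simp: Ef_def g_def)
  qed
  ultimately show False using assms(2) unfolding Ts_free_def by blast
qed

lemma indep_iff:
  assumes "finite S"
  shows "(\<forall>u\<in>S. \<forall>v\<in>S. \<not> Ef A f u v) \<longleftrightarrow> fi A (map f (sorted_list_of_set S))"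
proof -
  define sl where "sl = sorted_list_of_set S"
  have ss: "sorted_wrt (<) sl" by (simp add: sl_def)
  have so: "sorted sl" by (simp add: sl_def)
  have setsl: "set sl = S" using assms by (simp add: sl_def)
  have "(\<forall>u\<in>S. \<forall>v\<in>S. \<not> Ef A f u v) \<longleftrightarrow> fi A (map f sl)"
  proof
    assume H: "\<forall>u\<in>S. \<forall>v\<in>S. \<not> Ef A f u v"
    show "fi A (map f sl)" unfolding fi_def
    proof (intro allI impI)
      fix i j assume ij: "i < j \<and> j < length (map f sl)"
      then have ij': "i < j" "j < length sl" by auto
      then have lt: "sl ! i < sl ! j" using ss sorted_wrt_nth_less by blast
      have "sl ! i \<in> set sl" "sl ! j \<in> set sl" using ij' by simp_all
      then have "sl ! i \<in> S" "sl ! j \<in> S" using setsl by simp_all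
      then have "\<not> Ef A f (sl ! i) (sl ! j)" using H by blast
      then have "\<not> A (f (sl ! i)) (f (sl ! j))" using lt unfolding Ef_def by blast
      then show "\<not> A (map f sl ! i) (map f sl ! j)" using ij' by simp
    qed
  next
    assume H: "fi A (map f sl)"
    have *: "\<not> A (f u) (f v)" if "u \<in> S" "v \<in> S" "u < v" for u v
    proof -
      have "u \<in> set sl" "v \<in> set sl" using that(1,2) setsl by simp_all
      then obtain i j where i: "i < length sl" "sl ! i = u" and j: "j < length sl" "sl ! j = v"
        by (auto simp: in_set_conv_nth)
      have "i < j"
      proof (rule ccontr)
        assume "\<not> i < j"
        then have "j \<le> i" by simp
        then have "sl ! j \<le> sl ! i" using so i(1) by (simp add: sorted_nth_mono)
        then show False using i(2) j(2) \<open>u < v\<close> by simp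
      qed
      then have "\<not> A (map f sl ! i) (map f sl ! j)" using H j(1) unfolding fi_def by simp
      then show ?thesis using i j by simp
    qed
    show "\<forall>u\<in>S. \<forall>v\<in>S. \<not> Ef A f u v"
    proof (intro ballI)
      fix u v assume "u \<in> S" "v \<in> S"
      then show "\<not> Ef A f u v" using *[of u v] *[of v u] unfolding Ef_def by blast
    qed
  qed
  then show ?thesis by (simp add: sl_def)
qed

lemma count_L:
  assumes f: "bij_betw f {..<n} V"
  shows "card {js. (length js = k \<and> set js \<subseteq> {..<n} \<and> distinct js) \<and> fi A (map f js)}
       = card {xs. length xs = k \<and> set xs \<subseteq> V \<and> distinct xs \<and> fi A xs}"
proof -
  let ?X = "{js. (length js = k \<and> set js \<subseteq> {..<n} \<and> distinct js) \<and> fi A (map f js)}"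
  let ?I = "{xs. length xs = k \<and> set xs \<subseteq> V \<and> distinct xs \<and> fi A xs}"
  have inj: "inj_on f {..<n}" using f by (simp add: bij_betw_def)
  have injm: "inj_on (map f) ?X"
  proof (rule inj_onI)
    fix x y assume xy: "x \<in> ?X" "y \<in> ?X" "map f x = map f y"
    have "set x \<union> set y \<subseteq> {..<n}" using xy by simp
    then have "inj_on f (set x \<union> set y)" by (rule inj_on_subset[OF inj])
    then show "x = y" using xy(3) inj_on_map_eq_map by blast
  qed
  have imeq: "map f ` ?X = ?I"
  proof
    show "map f ` ?X \<subseteq> ?I"
    proof
      fix ys assume "ys \<in> map f ` ?X"
      then obtain x where x: "x \<in> ?X" "ys = map f x" by blast
      have sx: "set x \<subseteq> {..<n}" using x(1) by simp
      have "set ys \<subseteq> V"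
      proof
        fix y assume "y \<in> set ys"
        then obtain z where "z \<in> set x" "y = f z" using x(2) by auto
        then show "y \<in> V" using sx bij_betw_apply[OF f] by blast
      qed
      moreover have "distinct ys" using x(1) x(2) inj_on_subset[OF inj sx] by (simp add: distinct_map)
      moreover have "length ys = k" "fi A ys" using x by simp_all
      ultimately show "ys \<in> ?I" by simp
    qed
  next
    show "?I \<subseteq> map f ` ?X"
    proof
      fix xs assume xs: "xs \<in> ?I"
      define js where "js = map (inv_into {..<n} f) xs"
      have V: "V = f ` {..<n}" using f by (simp add: bij_betw_def)
      have sV: "set xs \<subseteq> f ` {..<n}" using xs V by simp
      have "map f js = xs" unfolding js_def map_map
        by (rule map_idI) (use sV in \<open>auto simp: f_inv_into_f\<close>)
      moreover have "set js \<subseteq> {..<n}"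
      proof
        fix y assume "y \<in> set js"
        then obtain x where x: "x \<in> set xs" "y = inv_into {..<n} f x" by (auto simp: js_def)
        then have "x \<in> f ` {..<n}" using sV by blast
        then show "y \<in> {..<n}" using x(2) by (simp only: inv_into_into)
      qed
      moreover have "distinct js"
      proof -
        have "inj_on (inv_into {..<n} f) (set xs)" using inj_on_inv_into[OF sV] .
        then show ?thesis using xs by (simp add: js_def distinct_map)
      qed
      moreover have "length js = k" using xs by (simp add: js_def)
      ultimately have "js \<in> ?X" using xs by simp
      then show "xs \<in> map f ` ?X" using \<open>map f js = xs\<close>[symmetric] by (rule rev_image_eqI)
    qed
  qed
  show ?thesis using card_image[OF injm] imeq by simp
qed

lemma perm_le:
  assumes S: "S \<subseteq> {..<n}" and xs: "xs \<in> permutations_of_set S" and ys: "ys \<in> permutations_of_set S"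
    and that: "\<And>f \<tau>. f \<in> F \<Longrightarrow> \<tau> permutes S \<Longrightarrow> f \<circ> \<tau> \<in> F" "finite F"
  shows "card {f \<in> F. fi A (map f ys)} \<le> card {f \<in> (F :: (nat \<Rightarrow> 'a) set). fi A (map f xs)}"
proof -
  have sx: "set xs = S" "distinct xs" and sy: "set ys = S" "distinct ys"
    using xs ys by (auto simp: permutations_of_set_def)
  have len: "length xs = length ys" using sx sy by (metis distinct_card)
  define ix where "ix = (\<lambda>x. THE i. i < length xs \<and> xs ! i = x)"
  have ix1: "ix x < length xs \<and> xs ! ix x = x" if "x \<in> S" for x
  proof -
    have "\<exists>!i. i < length xs \<and> xs ! i = x" using distinct_Ex1[OF sx(2)] that sx(1) by blast
    then show ?thesis unfolding ix_def by (rule theI')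
  qed
  have ix2: "ix (xs ! i) = i" if "i < length xs" for i
    unfolding ix_def
  proof (rule the_equality)
    show "i < length xs \<and> xs ! i = xs ! i" using that by simp
    fix j assume "j < length xs \<and> xs ! j = xs ! i"
    then show "j = i" using that sx(2) nth_eq_iff_index_eq by blast
  qed
  define \<tau> where "\<tau> = (\<lambda>x. if x \<in> S then ys ! (ix x) else x)"
  have map: "map \<tau> xs = ys"
  proof (rule nth_equalityI)
    show "length (map \<tau> xs) = length ys" using len by simp
    fix i assume "i < length (map \<tau> xs)"
    then have "i < length xs" by simp
    moreover have "xs ! i \<in> S" using calculation sx(1) nth_mem by blast
    ultimately show "map \<tau> xs ! i = ys ! i" by (simp add: \<tau>_def ix2)
  qed
  have "inj_on \<tau> S"
  proof (rule inj_onI)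
    fix a b assume ab: "a \<in> S" "b \<in> S" "\<tau> a = \<tau> b"
    then have "ys ! ix a = ys ! ix b" by (simp add: \<tau>_def)
    moreover have "ix a < length ys" "ix b < length ys" using ab ix1 len by auto
    ultimately have "ix a = ix b" using sy nth_eq_iff_index_eq by blast
    then show "a = b" using ab ix1 by metis
  qed
  moreover have "\<tau> ` S = S"
  proof -
    have "\<tau> ` S = \<tau> ` set xs" using sx by simp
    also have "\<dots> = set (map \<tau> xs)" by simp
    finally show ?thesis using map sy by simp
  qed
  ultimately have "bij_betw \<tau> S S" by (simp add: bij_betw_def)
  then have perm: "\<tau> permutes S" by (rule bij_imp_permutes) (simp add: \<tau>_def)
  have "inj_on (\<lambda>f. f \<circ> \<tau>) {f \<in> F. fi A (map f ys)}"
  proof (rule inj_onI)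
    fix f g assume "f \<circ> \<tau> = g \<circ> \<tau>"
    then have "f \<circ> \<tau> \<circ> inv \<tau> = g \<circ> \<tau> \<circ> inv \<tau>" by simp
    then show "f = g" using permutes_inverses(1)[OF perm]
      by (simp add: comp_assoc fun_eq_iff)
  qed
  moreover have "(\<lambda>f. f \<circ> \<tau>) ` {f \<in> F. fi A (map f ys)} \<subseteq> {f \<in> F. fi A (map f xs)}"
    using that(1)[OF _ perm] map by (auto simp flip: map_map)
  moreover have "finite {f \<in> F. fi A (map f xs)}" using that(2) by simp
  ultimately show ?thesis by (rule card_inj_on_le)
qed

lemma card_ind: "finite X \<Longrightarrow> card {x\<in>X. P x} = (\<Sum>x\<in>X. if P x then 1 else 0::nat)"
  by (simp add: sum.If_cases Int_def)

theorem lemma2p3: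
  fixes V :: "'a set" and A :: "'a \<Rightarrow> 'a \<Rightarrow> bool" and s k n :: nat
  assumes "s \<ge> 1" and "digraph V A" and "card V = n" and "Ts_free s V A"
    and "k \<ge> 1"
  shows "\<exists>(W :: nat set) E. graph W E \<and> card W = n \<and> Ks_free s W E \<and>
           real (indep_count k W E) \<le> (exp 1 / real k) ^ k * real (fwi k V A)"
proof -
  have finV: "finite V" using assms(2) by (simp add: digraph_def)
  obtain f0 where f0: "bij_betw f0 {..<n} V"
    using ex_bij_betw_nat_finite[OF finV] assms(3) by (auto simp: atLeast0LessThan)
  define F where "F = {f \<in> {..<n} \<rightarrow>\<^sub>E V. bij_betw f {..<n} V}"
  have finPi: "finite ({..<n} \<rightarrow>\<^sub>E V)" by (rule finite_PiE) (simp_all add: finV)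
  have "F \<subseteq> {..<n} \<rightarrow>\<^sub>E V" unfolding F_def by blast
  then have finF: "finite F" using finPi by (rule finite_subset)
  have r1: "bij_betw (restrict f0 {..<n}) {..<n} V = bij_betw f0 {..<n} V"
    by (rule bij_betw_cong) simp
  have r2: "restrict f0 {..<n} \<in> {..<n} \<rightarrow>\<^sub>E V"
    using bij_betw_apply[OF f0] by (simp add: restrict_PiE_iff)
  have "restrict f0 {..<n} \<in> F"
    unfolding F_def using r1 r2 f0 by simp
  then have neF: "F \<noteq> {}" by auto
  have closF: "f \<circ> \<tau> \<in> F" if "f \<in> F" "\<tau> permutes S" "S \<subseteq> {..<n}" for f \<tau> S
  proof -
    have p: "\<tau> permutes {..<n}" using that permutes_subset by blast
    have b: "bij_betw \<tau> {..<n} {..<n}" using permutes_imp_bij[OF p] .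
    have "bij_betw f {..<n} V" using that(1) unfolding F_def by simp
    then have "bij_betw (f \<circ> \<tau>) {..<n} V" using b by (rule bij_betw_trans[rotated])
    moreover have "f \<circ> \<tau> \<in> {..<n} \<rightarrow>\<^sub>E V"
    proof -
      have fP: "f \<in> {..<n} \<rightarrow>\<^sub>E V" using \<open>f \<in> F\<close> unfolding F_def by simp
      have "(f \<circ> \<tau>) x \<in> V" if "x \<in> {..<n}" for x
      proof -
        have "\<tau> x \<in> {..<n}" using permutes_in_image[OF p, of x] that by simp
        then show ?thesis using fP by (simp add: PiE_iff)
      qed
      moreover have "(f \<circ> \<tau>) x = undefined" if "x \<notin> {..<n}" for x
      proof -
        have "\<tau> x = x" using p that unfolding permutes_def by blast
        then show ?thesis using fP that by (simp add: PiE_iff extensional_def)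
      qed
      ultimately show ?thesis by (simp add: PiE_iff extensional_def)
    qed
    ultimately show ?thesis unfolding F_def by simp
  qed
  define I where "I = {xs. length xs = k \<and> set xs \<subseteq> V \<and> distinct xs \<and> fi A xs}"
  define L where "L = {js. length js = k \<and> set js \<subseteq> {..<n} \<and> distinct js}"
  define K where "K = {S. S \<subseteq> {..<n} \<and> card S = k}"
  define c where "c = (\<lambda>js. card {f \<in> F. fi A (map f js)})"
  define N where "N = (\<lambda>f. card {S\<in>K. fi A (map f (sorted_list_of_set S))})"
  have "K \<subseteq> Pow {..<n}" unfolding K_def by blast
  then have finK: "finite K" by (rule finite_subset) simp
  have "L \<subseteq> {xs. set xs \<subseteq> {..<n} \<and> length xs = k}" unfolding L_def by blast
  then have finL: "finite L" using finite_lists_length_eq[OF finite_lessThan[of n], of k] by (rule finite_subset)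
  have "I \<subseteq> {xs. set xs \<subseteq> V \<and> length xs = k}" unfolding I_def by blast
  then have finI: "finite I" using finite_lists_length_eq[OF finV, of k] by (rule finite_subset)
  have cS: "c js = c (sorted_list_of_set S)" if "S \<in> K" "js \<in> permutations_of_set S" for S "js"
  proof -
    have S1: "S \<subseteq> {..<n}" using that(1) by (simp add: K_def)
    have S: "S \<subseteq> {..<n}" "finite S" using S1 finite_subset[OF S1] by simp_all
    have so: "sorted_list_of_set S \<in> permutations_of_set S" using S by (simp add: permutations_of_set_def)
    have cl: "\<And>f \<tau>. f \<in> F \<Longrightarrow> \<tau> permutes S \<Longrightarrow> f \<circ> \<tau> \<in> F" using closF S(1) by blast
    have "card {f \<in> F. fi A (map f (sorted_list_of_set S))} \<le> card {f \<in> F. fi A (map f js)}"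
      by (rule perm_le[OF S(1) that(2) so cl finF])
    moreover have "card {f \<in> F. fi A (map f js)} \<le> card {f \<in> F. fi A (map f (sorted_list_of_set S))}"
      by (rule perm_le[OF S(1) so that(2) cl finF])
    ultimately show ?thesis unfolding c_def by (rule antisym[rotated])
  qed
  have LU: "L = (\<Union>S\<in>K. permutations_of_set S)"
    unfolding L_def K_def permutations_of_set_def by (auto simp: distinct_card)
  have sumN: "(\<Sum>f\<in>F. N f) = (\<Sum>S\<in>K. c (sorted_list_of_set S))"
  proof -
    have "(\<Sum>f\<in>F. N f) = (\<Sum>f\<in>F. \<Sum>S\<in>K. if fi A (map f (sorted_list_of_set S)) then 1 else 0)"
      unfolding N_def using finK by (simp add: card_ind)
    also have "\<dots> = (\<Sum>S\<in>K. \<Sum>f\<in>F. if fi A (map f (sorted_list_of_set S)) then 1 else 0)"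
      by (rule sum.swap)
    also have "\<dots> = (\<Sum>S\<in>K. c (sorted_list_of_set S))"
      unfolding c_def using finF by (simp add: card_ind)
    finally show ?thesis .
  qed
  have "card F * card I = (\<Sum>f\<in>F. card {js\<in>L. fi A (map f js)})"
    using count_L[of _ n V k A] unfolding F_def I_def L_def by simp
  also have "\<dots> = (\<Sum>f\<in>F. \<Sum>js\<in>L. if fi A (map f js) then 1 else 0)"
    using finL by (simp add: card_ind)
  also have "\<dots> = (\<Sum>js\<in>L. \<Sum>f\<in>F. if fi A (map f js) then 1 else 0)"
    by (rule sum.swap)
  also have "\<dots> = (\<Sum>js\<in>L. c js)"
    unfolding c_def using finF by (simp add: card_ind)
  also have "\<dots> = (\<Sum>S\<in>K. \<Sum>js\<in>permutations_of_set S. c js)"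
    unfolding LU
  proof (rule sum.UNION_disjoint)
    show "finite K" by (rule finK)
    show "\<forall>S\<in>K. finite (permutations_of_set S)" by simp
    show "\<forall>S\<in>K. \<forall>T\<in>K. S \<noteq> T \<longrightarrow> permutations_of_set S \<inter> permutations_of_set T = {}"
      by (auto simp: permutations_of_set_def)
  qed
  also have "\<dots> = (\<Sum>S\<in>K. fact k * c (sorted_list_of_set S))"
  proof (rule sum.cong[OF refl])
    fix S assume S: "S \<in> K"
    then have S1: "S \<subseteq> {..<n}" "card S = k" by (simp_all add: K_def)
    then have "finite S" "card S = k" using finite_subset[OF S1(1)] by simp_all
    then show "(\<Sum>js\<in>permutations_of_set S. c js) = fact k * c (sorted_list_of_set S)"
      using cS[OF S] by simp
  qed
  also have "\<dots> = fact k * (\<Sum>f\<in>F. N f)" by (simp add: sumN sum_distrib_left)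
  finally have key: "card F * card I = fact k * (\<Sum>f\<in>F. N f)" .
  obtain f where f: "f \<in> F" "N f * fact k \<le> card I"
  proof (rule ccontr)
    assume "\<not> thesis"
    then have H: "\<forall>f\<in>F. card I < N f * fact k" using that by (meson not_le)
    have "(\<Sum>f\<in>F. card I) < (\<Sum>f\<in>F. N f * fact k)"
      by (rule sum_strict_mono[OF finF neF]) (use H in auto)
    moreover have "(\<Sum>f\<in>F. N f * fact k) = fact k * (\<Sum>f\<in>F. N f)"
      by (simp add: sum_distrib_left mult.commute)
    moreover have "(\<Sum>f\<in>F. card I) = card F * card I" by simp
    ultimately show False using key by linarith
  qed
  have fb: "bij_betw f {..<n} V" using f(1) by (simp add: F_def)
  have Neq: "indep_count k {..<n} (Ef A f) = N f"
    unfolding indep_count_def N_def K_def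
  proof (rule arg_cong[where f=card], rule Collect_cong)
    fix S
    show "(S \<subseteq> {..<n} \<and> card S = k \<and> (\<forall>u\<in>S. \<forall>v\<in>S. \<not> Ef A f u v)) \<longleftrightarrow>
          (S \<in> {S. S \<subseteq> {..<n} \<and> card S = k} \<and> fi A (map f (sorted_list_of_set S)))"
    proof (cases "S \<subseteq> {..<n}")
      case True
      then have "finite S" using finite_subset by blast
      then show ?thesis using indep_iff[of S A f] True by simp
    qed simp
  qed
  have If: "card I \<le> fwi k V A"
    unfolding fwi_def I_def fi_def
    by (rule card_mono) (auto intro: finite_subset[OF _ finite_lists_length_eq[OF finV, of k]])
  have "real (N f * fact k) \<le> real (card I)" using f(2) by (simp only: of_nat_le_iff)
  then have "real (N f) * fact k \<le> real (card I)" by simp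
  then have "real (N f) \<le> real (card I) / fact k"
    by (simp add: pos_le_divide_eq)
  also have "\<dots> \<le> real (fwi k V A) / fact k"
    using If by (simp add: divide_right_mono)
  also have "\<dots> = 1 / fact k * real (fwi k V A)" by simp
  also have "\<dots> \<le> (exp 1 / real k) ^ k * real (fwi k V A)"
    by (rule mult_right_mono[OF inv_fact_le[OF assms(5)]]) simp
  finally have bound: "real (N f) \<le> (exp 1 / real k) ^ k * real (fwi k V A)" .
  show ?thesis
    apply (rule exI[of _ "{..<n}"], rule exI[of _ "Ef A f"])
    using graph_Ef[of n A f] Ks_free_Ef[OF fb assms(4)] Neq bound by simp
qed
end
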